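(* Let $d\ge2$, $0<\tau\le1$, and $\varphi_0\in\mathscr S'(\mathbb{R}^d)$ with $\nabla\varphi_0\in\mathcal{PM}^{d-1}$. Then $$\|L\|_{\mathscr L(\mathscr{Y}_{d-\frac43})}\lesssim\sqrt\tau\,|\ln(\tau/e)|\,\|\nabla\varphi_0\|_{\mathcal{PM}^{d-1}},\qquad \|L\|_{\mathscr L(\mathscr{Y}_{d-\frac43},\mathcal X)}\lesssim\sqrt\tau\,|\ln(\tau/e)|\,\|\nabla\varphi_0\|_{\mathcal{PM}^{d-1}},$$ with implied constants depending only on $d$.
   Context: Fourier transform $\widehat f(\xi)=\int f(x)e^{-i\xi\cdot x}dx$. $\mathcal{PM}^{a}=\{f\in\mathscr S'(\mathbb{R}^d):\|f\|_{\mathcal{PM}^a}=\operatorname{ess\,sup}_\xi|\xi|^a|\widehat f(\xi)|<\infty\}$; $\|\nabla\varphi_0\|_{\mathcal{PM}^{d-1}}=\operatorname{ess\,sup}_\xi|\xi|^{d}|\widehat{\varphi_0}(\xi)|$. For $a<d$, $\mathscr{Y}_a=\{u\in L^\infty_{\rm loc}(0,\infty;\mathscr S'(\mathbb{R}^d)):\|u\|_{\mathscr{Y}_a}=\operatorname{ess\,sup}_{t>0,\xi}t^{1+(a-d)/2}|\xi|^a|\widehat u(\xi,t)|<\infty\}$; $\mathcal X=L^\infty(0,\infty;\mathcal{PM}^{d-2})$. The linear operator $L$ is $\widehat{Lu}(\xi,t)=(2\pi)^{-d}\int_0^t\int_{\mathbb{R}^d}e^{-(t-s)|\xi|^2}(\xi\cdot\eta)\widehat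 u(\xi-\eta,s)e^{-s|\eta|^2/\tau}\widehat{\varphi_0}(\eta)\,d\eta\,ds$. $\mathscr L(Y,Z)$ denotes bounded linear operators with operator norm, $\mathscr L(Y)=\mathscr L(Y,Y)$. *)

theory Defs
  imports "HOL-Analysis.Analysis" "HOL-Probability.Essential_Supremum"
begin

text \<open>Everything is expressed on the Fourier side.  A time-dependent (tempered
distribution valued) function u is represented by its spatial Fourier transform
U t xi (= hat u(xi,t)), a function of t > 0 and xi in R^d, where R^d is
real^'n with d = CARD('n).  hat phi_0 is represented by a function g.\<close>

definition wnorm :: "real \<Rightarrow> real \<Rightarrow> (real \<Rightarrow> real^'n::finite \<Rightarrow> complex) \<Rightarrow> ereal" where
  "wnorm b a U = esssup lborel
     (\<lambda>p::real \<times> (real^'n). if 0 < fst p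
        then ereal (fst p powr b * norm (snd p) powr a * cmod (U (fst p) (snd p)))
        else 0)"

definition Ynorm :: "real \<Rightarrow> (real \<Rightarrow> real^'n::finite \<Rightarrow> complex) \<Rightarrow> ereal" where
  "Ynorm a U = wnorm (1 + (a - real CARD('n)) / 2) a U"

text \<open>Norm of X = L^infty(0,infty; PM^(d-2)): ess sup_{t>0,xi} |xi|^(d-2) |hat u(xi,t)|.\<close>
definition Xnorm :: "(real \<Rightarrow> real^'n::finite \<Rightarrow> complex) \<Rightarrow> ereal" where
  "Xnorm U = wnorm 0 (real CARD('n) - 2) U"

definition meas_td :: "(real \<Rightarrow> real^'n::finite \<Rightarrow> complex) \<Rightarrow> bool" where
  "meas_td U \<longleftrightarrow> (\<lambda>p::real \<times> (real^'n). if 0 < fst p then U (fst p) (snd p) else 0)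
                    \<in> borel_measurable lborel"

definition inY :: "real \<Rightarrow> (real \<Rightarrow> real^'n::finite \<Rightarrow> complex) \<Rightarrow> bool" where
  "inY a U \<longleftrightarrow> meas_td U \<and> Ynorm a U < \<infinity>"

definition inX :: "(real \<Rightarrow> real^'n::finite \<Rightarrow> complex) \<Rightarrow> bool" where
  "inX U \<longleftrightarrow> meas_td U \<and> Xnorm U < \<infinity>"

text \<open>|| grad phi_0 ||_{PM^(d-1)} = ess sup_xi |xi|^d |hat phi_0(xi)|, with g = hat phi_0.\<close>
definition PMgrad :: "(real^'n::finite \<Rightarrow> complex) \<Rightarrow> ereal" where
  "PMgrad g = esssup lborel (\<lambda>xi::real^'n. ereal (norm xi powr real CARD('n) * cmod (g xi)))"

definition Lop :: "real \<Rightarrow> (real^'n::finite \<Rightarrow> complex) \<Rightarrow> (real \<Rightarrow> real^'n \<Rightarrow> complex)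
                    \<Rightarrow> real \<Rightarrow> real^'n \<Rightarrow> complex" where
  "Lop \<tau> g U t xi = complex_of_real ((2 * pi) powr (- real CARD('n))) *
     (LINT s:{0..t}|lborel. (LINT eta|lborel.
        complex_of_real (exp (- (t - s) * (norm xi)\<^sup>2) * (xi \<bullet> eta) * exp (- s * (norm eta)\<^sup>2 / \<tau>))
        * U s (xi - eta) * g eta))"

end

theory Submission
  imports Defs
begin



lemma ball_vol:
  fixes x :: "'a::euclidean_space"
  assumes "0 \<le> \<rho>"
  shows "emeasure lborel (ball x \<rho>) \<le> ennreal ((2*\<rho>) ^ DIM('a))"
proof -
  have sub: "ball x \<rho> \<subseteq> cbox (x - \<rho> *\<^sub>R (\<Sum>Basis)) (x + \<rho> *\<^sub>R (\<Sum>Basis))"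
  proof
    fix y assume "y \<in> ball x \<rho>"
    then have d: "norm (y - x) < \<rho>" by (simp add: dist_norm norm_minus_commute)
    show "y \<in> cbox (x - \<rho> *\<^sub>R (\<Sum>Basis)) (x + \<rho> *\<^sub>R (\<Sum>Basis))"
      unfolding mem_box
    proof (intro ballI conjI)
      fix b :: 'a assume b: "b \<in> Basis"
      have "\<bar>(y - x) \<bullet> b\<bar> \<le> norm (y - x)" using b by (rule Basis_le_norm)
      then have "\<bar>y \<bullet> b - x \<bullet> b\<bar> \<le> \<rho>" using d by (simp add: inner_diff_left)
      then show "(x - \<rho> *\<^sub>R (\<Sum>Basis)) \<bullet> b \<le> y \<bullet> b" "y \<bullet> b \<le> (x + \<rho> *\<^sub>R (\<Sum>Basis)) \<bullet> b"
        using b by (auto simp: inner_diff_left inner_add_left)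
    qed
  qed
  have "emeasure lborel (ball x \<rho>) \<le> emeasure lborel (cbox (x - \<rho> *\<^sub>R (\<Sum>Basis)) (x + \<rho> *\<^sub>R (\<Sum>Basis)))"
    by (rule emeasure_mono[OF sub]) simp
  also have "\<dots> = ennreal (\<Prod>b\<in>(Basis::'a set). 2 * \<rho>)"
    using assms by (simp add: emeasure_lborel_cbox_eq inner_diff_left inner_add_left algebra_simps)
  also have "\<dots> = ennreal ((2*\<rho>) ^ DIM('a))" by simp
  finally show ?thesis .
qed



lemma ennreal_le_suminf: "(f k :: ennreal) \<le> (\<Sum>i. f i)"
  using sum_le_suminf[of f "{k}"] by (simp add: summableI)

lemma shell_sum:
  fixes h :: "'a::euclidean_space \<Rightarrow> real" and S :: "nat \<Rightarrow> 'a set"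
  assumes cover: "\<And>y. y \<in> A \<Longrightarrow> h y \<noteq> 0 \<Longrightarrow> \<exists>k. y \<in> S k"
    and Sm: "\<And>k. S k \<in> sets lborel"
    and hb: "\<And>k y. y \<in> S k \<Longrightarrow> h y \<le> c k"
    and hnn: "\<And>y. 0 \<le> h y"
    and cnn: "\<And>k. 0 \<le> c k"
    and mb: "\<And>k. emeasure lborel (S k) \<le> ennreal (m k)"
    and mnn: "\<And>k. 0 \<le> m k"
    and sm: "summable (\<lambda>k. c k * m k)"
  shows "(\<integral>\<^sup>+y. indicator A y * ennreal (h y) \<partial>lborel) \<le> ennreal (\<Sum>k. c k * m k)"
proof -
  have pw: "indicator A y * ennreal (h y) \<le> (\<Sum>k. ennreal (c k) * indicator (S k) y)" for y
  proof (cases "y \<in> A \<and> h y \<noteq> 0")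
    case True
    then obtain k where k: "y \<in> S k" using cover by blast
    have "indicator A y * ennreal (h y) = ennreal (h y)" using True by simp
    also have "\<dots> \<le> ennreal (c k) * indicator (S k) y" using k hb[OF k] by (simp add: ennreal_leI)
    also have "\<dots> \<le> (\<Sum>k. ennreal (c k) * indicator (S k) y)" by (rule ennreal_le_suminf)
    finally show ?thesis .
  next
    case False
    then have "indicator A y * ennreal (h y) = 0" by (cases "y \<in> A") auto
    then show ?thesis by (simp only: zero_le)
  qed
  have "(\<integral>\<^sup>+y. indicator A y * ennreal (h y) \<partial>lborel) \<le> (\<integral>\<^sup>+y. (\<Sum>k. ennreal (c k) * indicator (S k) y) \<partial>lborel)"
    by (rule nn_integral_mono) (rule pw)
  also have "\<dots> = (\<Sum>k. \<integral>\<^sup>+y. ennreal (c k) * indicator (S k) y \<partial>lborel)"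
    by (rule nn_integral_suminf) (use Sm in simp)
  also have "\<dots> = (\<Sum>k. ennreal (c k) * emeasure lborel (S k))"
    by (rule arg_cong[where f=suminf], rule ext, rule nn_integral_cmult_indicator[OF Sm])
  also have "\<dots> \<le> (\<Sum>k. ennreal (c k * m k))"
  proof (rule suminf_le)
    fix k show "ennreal (c k) * emeasure lborel (S k) \<le> ennreal (c k * m k)"
      using mult_left_mono[OF mb[of k], of "ennreal (c k)"] by (simp add: ennreal_mult' cnn)
  qed (simp_all add: summableI)
  also have "\<dots> = ennreal (\<Sum>k. c k * m k)"
    by (rule suminf_ennreal2) (auto intro: sm cnn mnn mult_nonneg_nonneg)
  finally show ?thesis .
qed


lemma pow_exp: "0 < (x::real) \<Longrightarrow> x ^ n = exp (real n * ln x)"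
  by (metis exp_ln exp_of_nat_mult)
lemma ln2pow: "ln ((2::real)^m) = real m * ln 2"
  by (simp add: ln_realpow)
lemma alg_in:
  fixes r \<alpha> :: real and d k :: nat
  assumes r: "0 < r"
  shows "(r/2^(k+1)) powr (-\<alpha>) * (2*(r/2^k))^d = r powr (real d-\<alpha>) * 2 powr (\<alpha>+real d) * (2 powr (\<alpha>-real d))^k"
proof -
  obtain m where m: "m = k+1" by simp
  have l1: "ln (r/2^m) = ln r - real m * ln 2" using r by (simp add: ln_div ln2pow)
  have l2: "ln (2*(r/2^k)) = ln 2 + ln r - real k * ln 2" using r by (simp add: ln_div ln_mult ln2pow)
  have "(r/2^m) powr (-\<alpha>) = exp (-\<alpha> * (ln r - real m * ln 2))"
    using r l1 by (simp add: powr_def)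
  moreover have "(2*(r/2^k))^d = exp (real d * (ln 2 + ln r - real k * ln 2))"
    using r l2 by (subst pow_exp) simp_all
  moreover have "(2 powr (\<alpha>-real d))^k = exp (real k * ((\<alpha> - real d) * ln 2))"
    by (simp add: pow_exp powr_def)
  moreover have "r powr (real d-\<alpha>) * 2 powr (\<alpha>+real d) = exp ((real d - \<alpha>) * ln r + (\<alpha>+real d) * ln 2)"
    using r by (simp add: powr_def exp_add)
  ultimately show ?thesis unfolding m[symmetric] by (simp add: exp_add[symmetric] m algebra_simps)
qed
lemma alg_out:
  fixes r \<beta> :: real and d k :: nat
  assumes r: "0 < r"
  shows "(r*2^k) powr (-\<beta>) * (2*(r*2^(k+1)))^d = r powr (real d-\<beta>) * 2 powr (2*real d) * (2 powr (real d-\<beta>))^k"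
proof -
  obtain m where m: "m = k+1" by simp
  have l1: "ln (r*2^k) = ln r + real k * ln 2" using r by (simp add: ln_mult ln2pow)
  have l2: "ln (2*(r*2^m)) = ln 2 + ln r + real m * ln 2" using r by (simp add: ln_mult ln2pow)
  have "(r*2^k) powr (-\<beta>) = exp (-\<beta> * (ln r + real k * ln 2))"
    using r l1 by (simp add: powr_def)
  moreover have "(2*(r*2^m))^d = exp (real d * (ln 2 + ln r + real m * ln 2))"
    using r l2 by (subst pow_exp) simp_all
  moreover have "(2 powr (real d-\<beta>))^k = exp (real k * ((real d - \<beta>) * ln 2))"
    by (simp add: pow_exp powr_def)
  moreover have "r powr (real d-\<beta>) * 2 powr (2*real d) = exp ((real d - \<beta>) * ln r + (2*real d) * ln 2)"
    using r by (simp add: powr_def exp_add)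
  ultimately show ?thesis unfolding m[symmetric] by (simp add: exp_add[symmetric] m algebra_simps)
qed

lemma meas_LopV:
  fixes V :: "real \<Rightarrow> real^'n::finite \<Rightarrow> complex"
  assumes V[measurable]: "(\<lambda>p. V (fst p) (snd p)) \<in> borel_measurable (borel \<Otimes>\<^sub>M borel)"
   and g[measurable]: "g \<in> borel_measurable borel"
  shows "(\<lambda>p. Lop \<tau> g V (fst p) (snd p)) \<in> borel_measurable (borel \<Otimes>\<^sub>M borel)"
proof -
  define F where "F = (\<lambda>(ps::(real\<times>(real^'n))\<times>real) (eta::real^'n). complex_of_real (exp (- (fst (fst ps) - snd ps) * (norm (snd (fst ps)))\<^sup>2) * (snd (fst ps) \<bullet> eta) * exp (- snd ps * (norm eta)\<^sup>2 / \<tau>)) * V (snd ps) (snd (fst ps) - eta) * g eta)"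
  have "(\<lambda>x. F (fst x) (snd x)) \<in> borel_measurable (((borel \<Otimes>\<^sub>M borel) \<Otimes>\<^sub>M borel) \<Otimes>\<^sub>M borel)"
  proof -
    have [measurable]: "(\<lambda>x::((real\<times>(real^'n))\<times>real)\<times>(real^'n). g (snd x)) \<in> borel_measurable (((borel \<Otimes>\<^sub>M borel) \<Otimes>\<^sub>M borel) \<Otimes>\<^sub>M borel)"
      by (rule measurable_compose[OF measurable_snd g])
    have p: "(\<lambda>x::((real\<times>(real^'n))\<times>real)\<times>(real^'n). (snd (fst x), snd (fst (fst x)) - snd x)) \<in> (((borel \<Otimes>\<^sub>M borel) \<Otimes>\<^sub>M borel) \<Otimes>\<^sub>M borel) \<rightarrow>\<^sub>M (borel \<Otimes>\<^sub>M borel)"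
      by measurable
    have [measurable]: "(\<lambda>x::((real\<times>(real^'n))\<times>real)\<times>(real^'n). V (snd (fst x)) (snd (fst (fst x)) - snd x)) \<in> borel_measurable (((borel \<Otimes>\<^sub>M borel) \<Otimes>\<^sub>M borel) \<Otimes>\<^sub>M borel)"
      using measurable_compose[OF p V] by simp
    show ?thesis unfolding F_def by measurable
  qed
  then have "case_prod F \<in> borel_measurable (((borel \<Otimes>\<^sub>M borel) \<Otimes>\<^sub>M borel) \<Otimes>\<^sub>M lborel)"
    by (simp add: split_beta' cong: measurable_cong_sets)
  then have m1[measurable]: "(\<lambda>ps. integral\<^sup>L lborel (F ps)) \<in> borel_measurable ((borel \<Otimes>\<^sub>M borel) \<Otimes>\<^sub>M borel)"
    by (rule lborel.borel_measurable_lebesgue_integral)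
  define G where "G = (\<lambda>(p::real\<times>(real^'n)) (s::real). indicator {0..fst p} s *\<^sub>R integral\<^sup>L lborel (F (p,s)))"
  have "(\<lambda>x. G (fst x) (snd x)) \<in> borel_measurable ((borel \<Otimes>\<^sub>M borel) \<Otimes>\<^sub>M borel)"
    unfolding G_def by (simp only: prod.collapse indicator_def atLeastAtMost_iff case_prod_beta) measurable
  then have "case_prod G \<in> borel_measurable ((borel \<Otimes>\<^sub>M borel) \<Otimes>\<^sub>M lborel)"
    by (simp add: split_beta' cong: measurable_cong_sets)
  then have m2: "(\<lambda>p. integral\<^sup>L lborel (G p)) \<in> borel_measurable (borel \<Otimes>\<^sub>M borel)"
    by (rule lborel.borel_measurable_lebesgue_integral)
  have "Lop \<tau> g V (fst p) (snd p) = complex_of_real ((2 * pi) powr (- real CARD('n))) * integral\<^sup>L lborel (G p)" for p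
    unfolding Lop_def set_lebesgue_integral_def G_def F_def by simp
  then show ?thesis using m2 by simp
qed


lemma inner_int:
  fixes x :: "'a::euclidean_space"
  assumes a0: "0 \<le> \<alpha>" and ad: "\<alpha> < real DIM('a)" and r: "0 < r"
  shows "(\<integral>\<^sup>+y. indicator (ball x r) y * ennreal (norm (y - x) powr (-\<alpha>)) \<partial>lborel)
          \<le> ennreal (r powr (real DIM('a) - \<alpha>) * 2 powr (\<alpha> + real DIM('a)) / (1 - 2 powr (\<alpha> - real DIM('a))))"
proof -
  define d where "d = DIM('a)"
  define q where "q = (2::real) powr (\<alpha> - real d)"
  have q0: "0 \<le> q" "q < 1" using ad unfolding q_def d_def by (auto intro: powr_less_one)
  define S where "S = (\<lambda>k::nat. {y. r/2^(k+1) \<le> norm (y - x) \<and> norm (y - x) < r/2^k})"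
  have eqk: "(r/2^(k+1)) powr (-\<alpha>) * (2*(r/2^k))^d = r powr (real d-\<alpha>) * 2 powr (\<alpha>+real d) * q^k" for k
    unfolding q_def by (rule alg_in[OF r])
  have sm: "summable (\<lambda>k. (r/2^(k+1)) powr (-\<alpha>) * (2*(r/2^k))^d)"
    unfolding eqk using q0 by (intro summable_mult summable_geometric) simp
  have "(\<integral>\<^sup>+y. indicator (ball x r) y * ennreal (norm (y - x) powr (-\<alpha>)) \<partial>lborel)
        \<le> ennreal (\<Sum>k. (r/2^(k+1)) powr (-\<alpha>) * (2*(r/2^k))^d)"
  proof (rule shell_sum[where S=S])
    fix y assume y: "y \<in> ball x r" "norm (y - x) powr - \<alpha> \<noteq> 0"
    then have n0: "0 < norm (y - x)" by (cases "y = x") auto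
    have nr: "norm (y - x) < r" using y by (simp add: dist_norm norm_minus_commute)
    obtain n where n: "r / 2^n < norm (y - x)"
    proof -
      obtain n where "r / norm (y - x) < 2^n" using real_arch_pow[of 2 "r / norm (y - x)"] by auto
      then have "r / 2^n < norm (y - x)" using n0 by (simp add: field_simps)
      then show ?thesis by (rule that)
    qed
    define N where "N = (LEAST n. r / 2^n \<le> norm (y - x))"
    have N1: "r / 2^N \<le> norm (y - x)" unfolding N_def by (rule LeastI[of _ n]) (use n in simp)
    have "N \<noteq> 0" using N1 nr by (auto intro: ccontr)
    then obtain k where k: "N = Suc k" by (cases N) auto
    have "\<not> r / 2^k \<le> norm (y - x)"
    proof
      assume "r / 2^k \<le> norm (y - x)"
      then have "N \<le> k" unfolding N_def by (rule Least_le)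
      with k show False by simp
    qed
    then have "y \<in> S k" using N1 k unfolding S_def by auto
    then show "\<exists>k. y \<in> S k" ..
  next
    fix k show "S k \<in> sets lborel" unfolding S_def by measurable
  next
    fix k y assume "y \<in> S k"
    then have "r/2^(k+1) \<le> norm (y - x)" unfolding S_def by auto
    moreover have "0 < r/2^(k+1)" using r by simp
    ultimately show "norm (y - x) powr (-\<alpha>) \<le> (r/2^(k+1)) powr (-\<alpha>)"
      by (intro powr_mono2') (use a0 in auto)
  next
    fix k
    have "S k \<subseteq> ball x (r/2^k)" unfolding S_def by (auto simp: dist_norm norm_minus_commute)
    then have "emeasure lborel (S k) \<le> emeasure lborel (ball x (r/2^k))" by (intro emeasure_mono) simp_all
    also have "\<dots> \<le> ennreal ((2*(r/2^k))^DIM('a))" by (rule ball_vol) (use r in simp)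
    finally show "emeasure lborel (S k) \<le> ennreal ((2*(r/2^k))^d)" unfolding d_def .
  qed (use r sm in auto)
  also have "(\<Sum>k. (r/2^(k+1)) powr (-\<alpha>) * (2*(r/2^k))^d) = r powr (real d-\<alpha>) * 2 powr (\<alpha>+real d) / (1 - q)"
    unfolding eqk using q0 by (simp add: suminf_mult suminf_geometric divide_simps)
  finally show ?thesis unfolding q_def d_def .
qed

lemma outer_int:
  fixes x :: "'a::euclidean_space"
  assumes bd: "real DIM('a) < \<beta>" and r: "0 < r"
  shows "(\<integral>\<^sup>+y. indicator (- ball x r) y * ennreal (norm (y - x) powr (-\<beta>)) \<partial>lborel)
          \<le> ennreal (r powr (real DIM('a) - \<beta>) * 2 powr (2 * real DIM('a)) / (1 - 2 powr (real DIM('a) - \<beta>)))"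
proof -
  define d where "d = DIM('a)"
  define q where "q = (2::real) powr (real d - \<beta>)"
  have q0: "0 \<le> q" "q < 1" using bd unfolding q_def d_def by (auto intro: powr_less_one)
  have b0: "0 \<le> \<beta>" using bd by (metis less_eq_real_def of_nat_0_le_iff order_trans)
  define S where "S = (\<lambda>k::nat. {y. r*2^k \<le> norm (y - x) \<and> norm (y - x) < r*2^(k+1)})"
  have eqk: "(r*2^k) powr (-\<beta>) * (2*(r*2^(k+1)))^d = r powr (real d-\<beta>) * 2 powr (2*real d) * q^k" for k
    unfolding q_def by (rule alg_out[OF r])
  have sm: "summable (\<lambda>k. (r*2^k) powr (-\<beta>) * (2*(r*2^(k+1)))^d)"
    unfolding eqk using q0 by (intro summable_mult summable_geometric) simp
  have "(\<integral>\<^sup>+y. indicator (- ball x r) y * ennreal (norm (y - x) powr (-\<beta>)) \<partial>lborel)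
        \<le> ennreal (\<Sum>k. (r*2^k) powr (-\<beta>) * (2*(r*2^(k+1)))^d)"
  proof (rule shell_sum[where S=S])
    fix y assume y: "y \<in> - ball x r" "norm (y - x) powr - \<beta> \<noteq> 0"
    have nr: "r \<le> norm (y - x)" using y by (simp add: dist_norm norm_minus_commute)
    obtain n where n: "norm (y - x) < r * 2^(n+1)"
    proof -
      obtain n where "norm (y - x) / r < 2^n" using real_arch_pow[of 2 "norm (y - x) / r"] by auto
      then have a: "norm (y - x) < r * 2^n" using r by (simp add: field_simps)
      have "r * 2^n \<le> r * 2^(n+1)" using r by simp
      with a have "norm (y - x) < r * 2^(n+1)" by linarith
      then show ?thesis by (rule that)
    qed
    define N where "N = (LEAST n. norm (y - x) < r * 2^(n+1))"
    have N1: "norm (y - x) < r * 2^(N+1)" unfolding N_def by (rule LeastI[of _ n]) (use n in simp)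
    have N2: "r * 2^N \<le> norm (y - x)"
    proof (cases N)
      case 0 then show ?thesis using nr by simp
    next
      case (Suc k)
      have "\<not> norm (y - x) < r * 2^(k+1)"
      proof
        assume "norm (y - x) < r * 2^(k+1)"
        then have "N \<le> k" unfolding N_def by (rule Least_le)
        with Suc show False by simp
      qed
      then show ?thesis using Suc by simp
    qed
    have "y \<in> S N" using N1 N2 unfolding S_def by auto
    then show "\<exists>k. y \<in> S k" ..
  next
    fix k show "S k \<in> sets lborel" unfolding S_def by measurable
  next
    fix k y assume "y \<in> S k"
    then have "r*2^k \<le> norm (y - x)" unfolding S_def by auto
    moreover have "0 < r*2^k" using r by simp
    ultimately show "norm (y - x) powr (-\<beta>) \<le> (r*2^k) powr (-\<beta>)"
      by (intro powr_mono2') (use b0 in auto)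
  next
    fix k
    have "S k \<subseteq> ball x (r*2^(k+1))" unfolding S_def by (auto simp: dist_norm norm_minus_commute)
    then have "emeasure lborel (S k) \<le> emeasure lborel (ball x (r*2^(k+1)))" by (intro emeasure_mono) simp_all
    also have "\<dots> \<le> ennreal ((2*(r*2^(k+1)))^DIM('a))" by (rule ball_vol) (use r in simp)
    finally show "emeasure lborel (S k) \<le> ennreal ((2*(r*2^(k+1)))^d)" unfolding d_def .
  qed (use r sm in auto)
  also have "(\<Sum>k. (r*2^k) powr (-\<beta>) * (2*(r*2^(k+1)))^d) = r powr (real d-\<beta>) * 2 powr (2*real d) / (1 - q)"
    unfolding eqk using q0 by (simp add: suminf_mult suminf_geometric divide_simps)
  finally show ?thesis unfolding q_def d_def .
qed



definition Kin :: "real \<Rightarrow> real \<Rightarrow> real" where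
  "Kin \<alpha> d = 2 powr (\<alpha> + d) / (1 - 2 powr (\<alpha> - d))"
definition Kout :: "real \<Rightarrow> real \<Rightarrow> real" where
  "Kout \<beta> d = 2 powr (2 * d) / (1 - 2 powr (d - \<beta>))"

lemma Kin_pos: "\<alpha> < d \<Longrightarrow> 0 < Kin \<alpha> d"
  unfolding Kin_def by (intro divide_pos_pos) (auto intro: powr_less_one)
lemma Kout_pos: "d < \<beta> \<Longrightarrow> 0 < Kout \<beta> d"
  unfolding Kout_def by (intro divide_pos_pos) (auto intro: powr_less_one)

lemma inner_int':
  fixes x :: "'a::euclidean_space"
  assumes "0 \<le> \<alpha>" "\<alpha> < real DIM('a)" "0 < r"
  shows "(\<integral>\<^sup>+y. indicator (ball x r) y * ennreal (norm (y - x) powr (-\<alpha>)) \<partial>lborel)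
          \<le> ennreal (Kin \<alpha> (real DIM('a)) * r powr (real DIM('a) - \<alpha>))"
  using inner_int[OF assms, of x] by (simp add: Kin_def mult.commute)

lemma outer_int':
  fixes x :: "'a::euclidean_space"
  assumes "real DIM('a) < \<beta>" "0 < r"
  shows "(\<integral>\<^sup>+y. indicator (- ball x r) y * ennreal (norm (y - x) powr (-\<beta>)) \<partial>lborel)
          \<le> ennreal (Kout \<beta> (real DIM('a)) * r powr (real DIM('a) - \<beta>))"
  using outer_int[OF assms, of x] by (simp add: Kout_def mult.commute)

lemma exp_neg_le_inv: "0 < (u::real) \<Longrightarrow> exp (- u) \<le> 1 / u"
proof -
  assume u: "0 < u"
  have "u \<le> exp u" using exp_ge_add_one_self[of u] by linarith
  then show ?thesis using u by (simp add: exp_minus field_simps)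
qed

lemma G_int:
  fixes c :: real
  assumes c: "0 < c"
  shows "(\<integral>\<^sup>+\<eta>. ennreal (norm (\<eta>::'a::euclidean_space) powr (1 - real DIM('a)) * exp (- c * (norm \<eta>)\<^sup>2)) \<partial>lborel)
          \<le> ennreal ((Kin (real DIM('a) - 1) (real DIM('a)) + Kout (real DIM('a) + 1) (real DIM('a))) * c powr (-1/2))"
proof -
  define d where "d = real DIM('a)"
  define R where "R = c powr (-1/2)"
  have R: "0 < R" unfolding R_def using c by simp
  have RR: "R * R = 1 / c" unfolding R_def using c by (simp add: powr_add[symmetric] powr_minus_divide)
  define f where "f = (\<lambda>\<eta>::'a. norm \<eta> powr (1 - d) * exp (- c * (norm \<eta>)\<^sup>2))"
  have fnn: "0 \<le> f \<eta>" for \<eta> unfolding f_def by simp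
  have fm[measurable]: "f \<in> borel_measurable borel" unfolding f_def by measurable
  have bm[measurable]: "ball (0::'a) R \<in> sets borel" by simp
  have split: "ennreal (f \<eta>) = indicator (ball (0::'a) R) \<eta> * ennreal (f \<eta>) + indicator (- ball (0::'a) R) \<eta> * ennreal (f \<eta>)" for \<eta>
    by (cases "\<eta> \<in> ball (0::'a) R") auto
  have "(\<integral>\<^sup>+\<eta>. ennreal (f \<eta>) \<partial>lborel) = (\<integral>\<^sup>+\<eta>. indicator (ball (0::'a) R) \<eta> * ennreal (f \<eta>) \<partial>lborel) + (\<integral>\<^sup>+\<eta>. indicator (- ball (0::'a) R) \<eta> * ennreal (f \<eta>) \<partial>lborel)"
    by (subst split) (rule nn_integral_add; measurable)
  also have "(\<integral>\<^sup>+\<eta>. indicator (ball (0::'a) R) \<eta> * ennreal (f \<eta>) \<partial>lborel) \<le> (\<integral>\<^sup>+\<eta>. indicator (ball (0::'a) R) \<eta> * ennreal (norm (\<eta> - 0) powr (- (d - 1))) \<partial>lborel)"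
  proof (rule nn_integral_mono)
    fix \<eta> :: 'a
    have "f \<eta> \<le> norm \<eta> powr (1 - d)" unfolding f_def
      by (rule mult_left_le) (use c in auto)
    then show "indicator (ball (0::'a) R) \<eta> * ennreal (f \<eta>) \<le> indicator (ball (0::'a) R) \<eta> * ennreal (norm (\<eta> - 0) powr (- (d - 1)))"
      by (intro mult_left_mono ennreal_leI) auto
  qed
  also have "\<dots> \<le> ennreal (Kin (d - 1) d * R powr (d - (d - 1)))"
    unfolding d_def by (rule inner_int') (use R in auto)
  also have "(\<integral>\<^sup>+\<eta>. indicator (- ball (0::'a) R) \<eta> * ennreal (f \<eta>) \<partial>lborel) \<le> (\<integral>\<^sup>+\<eta>. ennreal (1 / c) * (indicator (- ball (0::'a) R) \<eta> * ennreal (norm (\<eta> - 0) powr (- (d + 1)))) \<partial>lborel)"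
  proof (rule nn_integral_mono)
    fix \<eta> :: 'a
    show "indicator (- ball (0::'a) R) \<eta> * ennreal (f \<eta>) \<le> ennreal (1 / c) * (indicator (- ball (0::'a) R) \<eta> * ennreal (norm (\<eta> - 0) powr (- (d + 1))))"
    proof (cases "\<eta> \<in> ball (0::'a) R")
      case False
      then have n: "R \<le> norm \<eta>" by simp
      then have n0: "0 < norm \<eta>" using R by linarith
      have "exp (- c * (norm \<eta>)\<^sup>2) \<le> 1 / (c * (norm \<eta>)\<^sup>2)"
        using exp_neg_le_inv[of "c * (norm \<eta>)\<^sup>2"] c n0 by simp
      then have "f \<eta> \<le> norm \<eta> powr (1 - d) * (1 / (c * (norm \<eta>)\<^sup>2))"
        unfolding f_def by (intro mult_left_mono) auto
      also have "\<dots> = 1 / c * norm \<eta> powr (- (d + 1))"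
        using n0 c by (simp add: powr_add[symmetric] powr_minus_divide power2_eq_square powr_diff field_simps)
      finally have "f \<eta> \<le> 1 / c * norm \<eta> powr (- (d + 1))" .
      then show ?thesis using False c by (simp add: ennreal_mult'[symmetric] ennreal_leI)
    qed simp
  qed
  also have "\<dots> = ennreal (1 / c) * (\<integral>\<^sup>+\<eta>. indicator (- ball (0::'a) R) \<eta> * ennreal (norm (\<eta> - 0) powr (- (d + 1))) \<partial>lborel)"
    by (rule nn_integral_cmult) measurable
  also have "\<dots> \<le> ennreal (1 / c) * ennreal (Kout (d + 1) d * R powr (d - (d + 1)))"
    unfolding d_def by (intro mult_left_mono outer_int') (use R in auto)
  finally have "(\<integral>\<^sup>+\<eta>. ennreal (f \<eta>) \<partial>lborel) \<le> ennreal (Kin (d - 1) d * R powr (d - (d - 1))) + ennreal (1 / c) * ennreal (Kout (d + 1) d * R powr (d - (d + 1)))"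
    by (simp add: add_mono)
  also have "\<dots> = ennreal ((Kin (d - 1) d + Kout (d + 1) d) * R)"
  proof -
    have k1: "0 < Kin (d - 1) d" "0 < Kout (d + 1) d" by (auto intro: Kin_pos Kout_pos)
    have "R powr (d - (d + 1)) = 1 / R" using R by (simp add: powr_minus_divide)
    then have "1 / c * (Kout (d + 1) d * R powr (d - (d + 1))) = Kout (d + 1) d * R"
      using RR R c by (simp add: field_simps)
    then show ?thesis using k1 R c
      by (simp add: ennreal_mult'[symmetric] ennreal_plus[symmetric] distrib_right del: ennreal_plus)
  qed
  finally show ?thesis unfolding f_def R_def d_def .
qed


lemma rho_exp: assumes c: "0 < (c::real)" and r: "0 \<le> \<rho>" shows "\<rho> * exp (- c * \<rho>\<^sup>2) \<le> c powr (-1/2)"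
proof -
  define u where "u = sqrt c * \<rho>"
  have u0: "0 \<le> u" unfolding u_def using c r by simp
  have "0 \<le> (u - 1)\<^sup>2 + u" using u0 by simp
  then have "u \<le> 1 + u\<^sup>2" by (simp add: power2_diff)
  also have "\<dots> \<le> exp (u\<^sup>2)" by (rule exp_ge_add_one_self)
  finally have ue: "u \<le> exp (u\<^sup>2)" .
  have cu: "c * \<rho>\<^sup>2 = u\<^sup>2" unfolding u_def using c by (simp add: power_mult_distrib)
  have sc: "0 < sqrt c" using c by simp
  have rho: "\<rho> = u / sqrt c" unfolding u_def using sc by simp
  have "exp (- c * \<rho>\<^sup>2) = 1 / exp (u\<^sup>2)" using cu by (simp add: exp_minus inverse_eq_divide)
  then have "\<rho> * exp (- c * \<rho>\<^sup>2) = (u / exp (u\<^sup>2)) / sqrt c" using rho by simp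
  also have "\<dots> \<le> 1 / sqrt c"
  proof (rule divide_right_mono)
    show "u / exp (u\<^sup>2) \<le> 1" using ue by simp
  qed (use sc in simp)
  also have "\<dots> = c powr (-1/2)" using c by (simp add: powr_minus_divide powr_half_sqrt)
  finally show ?thesis .
qed
definition KG :: "real \<Rightarrow> real" where "KG d = Kin (d - 1) d + Kout (d + 1) d"
definition KJ :: "real \<Rightarrow> real \<Rightarrow> real" where "KJ a d = 2 powr a * (KG d + Kin a d)"

lemma J_int:
  fixes \<xi> :: "'a::euclidean_space"
  assumes a0: "0 \<le> a" and ad: "a < real DIM('a)" and c: "0 < c" and \<xi>: "\<xi> \<noteq> 0"
  shows "(\<integral>\<^sup>+\<eta>. ennreal (norm \<eta> powr (1 - real DIM('a)) * norm (\<xi> - \<eta>) powr (-a) * exp (- c * (norm \<eta>)\<^sup>2)) \<partial>lborel)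
          \<le> ennreal (KJ a (real DIM('a)) * norm \<xi> powr (-a) * c powr (-1/2))"
proof -
  define d where "d = real DIM('a)"
  have d1: "1 \<le> d" unfolding d_def by simp
  define \<rho> where "\<rho> = norm \<xi> / 2"
  have \<rho>: "0 < \<rho>" unfolding \<rho>_def using \<xi> by simp
  have \<rho>a: "\<rho> powr (-a) = 2 powr a * norm \<xi> powr (-a)"
    unfolding \<rho>_def using \<xi> by (simp add: powr_divide powr_minus_divide)
  define f where "f = (\<lambda>\<eta>::'a. norm \<eta> powr (1 - d) * norm (\<xi> - \<eta>) powr (-a) * exp (- c * (norm \<eta>)\<^sup>2))"
  have fm[measurable]: "f \<in> borel_measurable borel" unfolding f_def by measurable
  have bm[measurable]: "ball \<xi> \<rho> \<in> sets borel" by simp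
  have split: "ennreal (f \<eta>) = indicator (ball \<xi> \<rho>) \<eta> * ennreal (f \<eta>) + indicator (- ball \<xi> \<rho>) \<eta> * ennreal (f \<eta>)" for \<eta>
    by (cases "\<eta> \<in> ball \<xi> \<rho>") auto
  have I: "(\<integral>\<^sup>+\<eta>. ennreal (f \<eta>) \<partial>lborel) = (\<integral>\<^sup>+\<eta>. indicator (ball \<xi> \<rho>) \<eta> * ennreal (f \<eta>) \<partial>lborel) + (\<integral>\<^sup>+\<eta>. indicator (- ball \<xi> \<rho>) \<eta> * ennreal (f \<eta>) \<partial>lborel)"
    by (subst split) (rule nn_integral_add; measurable)
  define B where "B = \<rho> powr (1 - d) * exp (- c * \<rho>\<^sup>2)"
  have I1: "(\<integral>\<^sup>+\<eta>. indicator (ball \<xi> \<rho>) \<eta> * ennreal (f \<eta>) \<partial>lborel) \<le> (\<integral>\<^sup>+\<eta>. ennreal B * (indicator (ball \<xi> \<rho>) \<eta> * ennreal (norm (\<eta> - \<xi>) powr (- a))) \<partial>lborel)"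
  proof (rule nn_integral_mono)
    fix \<eta> :: 'a
    show "indicator (ball \<xi> \<rho>) \<eta> * ennreal (f \<eta>) \<le> ennreal B * (indicator (ball \<xi> \<rho>) \<eta> * ennreal (norm (\<eta> - \<xi>) powr (- a)))"
    proof (cases "\<eta> \<in> ball \<xi> \<rho>")
      case True
      then have "norm (\<xi> - \<eta>) < \<rho>" by (simp add: dist_norm)
      moreover have "norm \<xi> \<le> norm \<eta> + norm (\<xi> - \<eta>)" by (metis norm_triangle_sub add.commute)
      ultimately have n: "\<rho> \<le> norm \<eta>" unfolding \<rho>_def by simp
      have p1: "norm \<eta> powr (1 - d) \<le> \<rho> powr (1 - d)" using n \<rho> d1 by (intro powr_mono2') auto
      have "\<rho>\<^sup>2 \<le> (norm \<eta>)\<^sup>2" using n \<rho> by (simp add: power_mono)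
      then have p2: "exp (- c * (norm \<eta>)\<^sup>2) \<le> exp (- c * \<rho>\<^sup>2)" using c by simp
      have "f \<eta> \<le> B * norm (\<eta> - \<xi>) powr (- a)" unfolding f_def B_def
      proof -
        have "norm \<eta> powr (1 - d) * norm (\<xi> - \<eta>) powr - a * exp (- c * (norm \<eta>)\<^sup>2)
              = (norm \<eta> powr (1 - d) * exp (- c * (norm \<eta>)\<^sup>2)) * norm (\<eta> - \<xi>) powr - a"
          by (simp add: norm_minus_commute)
        also have "\<dots> \<le> (\<rho> powr (1 - d) * exp (- c * \<rho>\<^sup>2)) * norm (\<eta> - \<xi>) powr - a"
          by (intro mult_right_mono mult_mono p1 p2) auto
        finally show "norm \<eta> powr (1 - d) * norm (\<xi> - \<eta>) powr - a * exp (- c * (norm \<eta>)\<^sup>2) \<le> \<rho> powr (1 - d) * exp (- c * \<rho>\<^sup>2) * norm (\<eta> - \<xi>) powr - a" .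
      qed
      then show ?thesis using True by (simp add: ennreal_mult'[symmetric] ennreal_leI B_def)
    qed simp
  qed
  also have "\<dots> = ennreal B * (\<integral>\<^sup>+\<eta>. indicator (ball \<xi> \<rho>) \<eta> * ennreal (norm (\<eta> - \<xi>) powr (- a)) \<partial>lborel)"
    by (rule nn_integral_cmult) measurable
  also have "\<dots> \<le> ennreal B * ennreal (Kin a d * \<rho> powr (d - a))"
    unfolding d_def by (intro mult_left_mono inner_int') (use a0 ad \<rho> in auto)
  also have "\<dots> = ennreal (Kin a d * (\<rho> * exp (- c * \<rho>\<^sup>2)) * \<rho> powr (-a))"
  proof -
    have eqB: "B * (Kin a d * \<rho> powr (d - a)) = Kin a d * (\<rho> * exp (- c * \<rho>\<^sup>2)) * \<rho> powr (-a)"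
    proof -
      have "\<rho> powr (1 - d) * \<rho> powr (d - a) = \<rho> powr (1 + (- a))" using \<rho> by (simp add: powr_add[symmetric])
      also have "\<dots> = \<rho> * \<rho> powr (-a)" using \<rho> by (simp only: powr_add powr_one_gt_zero_iff) simp
      finally have e: "\<rho> powr (1 - d) * \<rho> powr (d - a) = \<rho> * \<rho> powr (-a)" .
      have "B * (Kin a d * \<rho> powr (d - a)) = Kin a d * exp (- c * \<rho>\<^sup>2) * (\<rho> powr (1 - d) * \<rho> powr (d - a))"
        unfolding B_def by (simp only: mult_ac)
      also have "\<dots> = Kin a d * exp (- c * \<rho>\<^sup>2) * (\<rho> * \<rho> powr (-a))" by (simp only: e)
      finally show ?thesis by (simp only: mult_ac)
    qed
    have "0 \<le> B" unfolding B_def by simp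
    then have "ennreal B * ennreal (Kin a d * \<rho> powr (d - a)) = ennreal (B * (Kin a d * \<rho> powr (d - a)))"
      by (rule ennreal_mult'[symmetric])
    then show ?thesis unfolding eqB .
  qed
  also have "\<dots> \<le> ennreal (Kin a d * c powr (-1/2) * \<rho> powr (-a))"
    using rho_exp[OF c, of \<rho>] \<rho> Kin_pos[OF ad] by (intro ennreal_leI mult_right_mono mult_left_mono) (auto simp: d_def)
  finally have J1: "(\<integral>\<^sup>+\<eta>. indicator (ball \<xi> \<rho>) \<eta> * ennreal (f \<eta>) \<partial>lborel) \<le> ennreal (Kin a d * c powr (-1/2) * \<rho> powr (-a))" .
  have J2: "(\<integral>\<^sup>+\<eta>. indicator (- ball \<xi> \<rho>) \<eta> * ennreal (f \<eta>) \<partial>lborel) \<le> (\<integral>\<^sup>+\<eta>. ennreal (\<rho> powr (-a)) * ennreal (norm (\<eta>::'a) powr (1 - d) * exp (- c * (norm \<eta>)\<^sup>2)) \<partial>lborel)"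
  proof (rule nn_integral_mono)
    fix \<eta> :: 'a
    show "indicator (- ball \<xi> \<rho>) \<eta> * ennreal (f \<eta>) \<le> ennreal (\<rho> powr (-a)) * ennreal (norm (\<eta>::'a) powr (1 - d) * exp (- c * (norm \<eta>)\<^sup>2))"
    proof (cases "\<eta> \<in> ball \<xi> \<rho>")
      case False
      then have n: "\<rho> \<le> norm (\<xi> - \<eta>)" by (simp add: dist_norm)
      have p: "norm (\<xi> - \<eta>) powr (-a) \<le> \<rho> powr (-a)" using n \<rho> a0 by (intro powr_mono2') auto
      have "f \<eta> \<le> \<rho> powr (-a) * (norm \<eta> powr (1 - d) * exp (- c * (norm \<eta>)\<^sup>2))" unfolding f_def
        using mult_right_mono[OF p, of "norm \<eta> powr (1 - d) * exp (- c * (norm \<eta>)\<^sup>2)"] by (simp add: mult_ac)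
      then show ?thesis using False \<rho> by (simp add: ennreal_mult'[symmetric] ennreal_leI)
    qed simp
  qed
  also have "\<dots> = ennreal (\<rho> powr (-a)) * (\<integral>\<^sup>+\<eta>. ennreal (norm (\<eta>::'a) powr (1 - d) * exp (- c * (norm \<eta>)\<^sup>2)) \<partial>lborel)"
    by (rule nn_integral_cmult) measurable
  also have "\<dots> \<le> ennreal (\<rho> powr (-a)) * ennreal ((Kin (d - 1) d + Kout (d + 1) d) * c powr (-1/2))"
    unfolding d_def by (intro mult_left_mono G_int c) simp
  finally have J2': "(\<integral>\<^sup>+\<eta>. indicator (- ball \<xi> \<rho>) \<eta> * ennreal (f \<eta>) \<partial>lborel) \<le> ennreal (\<rho> powr (-a) * (KG d * c powr (-1/2)))"
    by (simp add: ennreal_mult'[symmetric] KG_def)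
  have "(\<integral>\<^sup>+\<eta>. ennreal (f \<eta>) \<partial>lborel) \<le> ennreal (Kin a d * c powr (-1/2) * \<rho> powr (-a)) + ennreal (\<rho> powr (-a) * (KG d * c powr (-1/2)))"
    unfolding I by (rule add_mono[OF J1 J2'])
  also have "\<dots> = ennreal (KJ a d * norm \<xi> powr (-a) * c powr (-1/2))"
  proof -
    have k: "0 < Kin a d" "0 < KG d" unfolding KG_def d_def using ad by (auto intro!: Kin_pos Kout_pos add_pos_pos)
    have "Kin a d * c powr (-1/2) * \<rho> powr (-a) + \<rho> powr (-a) * (KG d * c powr (-1/2)) = KJ a d * norm \<xi> powr (-a) * c powr (-1/2)"
      unfolding KJ_def \<rho>a by (simp add: algebra_simps)
    then show ?thesis using k \<rho> c by (simp add: ennreal_plus[symmetric] del: ennreal_plus)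
  qed
  finally show ?thesis unfolding f_def d_def .
qed



lemma T_int:
  fixes t l :: real
  assumes t: "0 < t" and l: "0 < l"
  shows "(\<integral>\<^sup>+s. indicator {0..t} s * ennreal (exp (- (t - s) * l\<^sup>2) * s powr (-5/6)) \<partial>lborel)
     \<le> ennreal (exp (- (t/2) * l\<^sup>2) * (6 * (t/2) powr (1/6)) + (t/2) powr (-5/6) * ((1 - exp (- (t/2) * l\<^sup>2)) / l\<^sup>2))"
proof -
  have h1: "((\<lambda>s. s powr (-5/6)) has_integral ((t/2) powr (1/6) / (1/6))) {0..t/2}"
    using has_integral_powr_from_0[of "-5/6" "t/2"] t by simp
  have i1: "(\<integral>\<^sup>+s. indicator {0..t/2} s * ennreal (s powr (-5/6)) \<partial>lborel) = ennreal (6 * (t/2) powr (1/6))"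
    using nn_integral_has_integral_lebesgue[OF _ h1] by (simp add: indicator_mult_ennreal mult.commute)
  have h2: "((\<lambda>s. exp (- (t - s) * l\<^sup>2)) has_integral (exp (- (t - t) * l\<^sup>2) / l\<^sup>2 - exp (- (t - t/2) * l\<^sup>2) / l\<^sup>2)) {t/2..t}"
  proof (rule fundamental_theorem_of_calculus)
    show "t/2 \<le> t" using t by simp
  next
    fix x assume "x \<in> {t/2..t}"
    show "((\<lambda>s. exp (- (t - s) * l\<^sup>2) / l\<^sup>2) has_vector_derivative exp (- (t - x) * l\<^sup>2)) (at x within {t/2..t})"
      unfolding has_real_derivative_iff_has_vector_derivative[symmetric]
      using l by (auto intro!: derivative_eq_intros simp: field_simps)
  qed
  have i2: "(\<integral>\<^sup>+s. indicator {t/2..t} s * ennreal (exp (- (t - s) * l\<^sup>2)) \<partial>lborel) = ennreal ((1 - exp (- (t/2) * l\<^sup>2)) / l\<^sup>2)"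
    using nn_integral_has_integral_lebesgue[OF _ h2] by (simp add: diff_divide_distrib indicator_mult_ennreal)
  have pw: "indicator {0..t} s * ennreal (exp (- (t - s) * l\<^sup>2) * s powr (-5/6))
      \<le> ennreal (exp (- (t/2) * l\<^sup>2)) * (indicator {0..t/2} s * ennreal (s powr (-5/6)))
        + ennreal ((t/2) powr (-5/6)) * (indicator {t/2..t} s * ennreal (exp (- (t - s) * l\<^sup>2)))" for s
  proof (cases "s \<in> {0..t}")
    case True
    show ?thesis
    proof (cases "s \<le> t/2")
      case le: True
      have "t/2 * l\<^sup>2 \<le> (t - s) * l\<^sup>2" using le by (intro mult_right_mono) auto
      then have "- (t - s) * l\<^sup>2 \<le> - (t/2) * l\<^sup>2" by (simp only: mult_minus_left neg_le_iff_le)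
      then have "exp (- (t - s) * l\<^sup>2) \<le> exp (- (t/2) * l\<^sup>2)" by (simp only: exp_le_cancel_iff)
      then have "exp (- (t - s) * l\<^sup>2) * s powr (-5/6) \<le> exp (- (t/2) * l\<^sup>2) * s powr (-5/6)"
        by (rule mult_right_mono) simp
      then have "indicator {0..t} s * ennreal (exp (- (t - s) * l\<^sup>2) * s powr (-5/6))
        \<le> ennreal (exp (- (t/2) * l\<^sup>2)) * (indicator {0..t/2} s * ennreal (s powr (-5/6)))"
        using True le by (simp add: ennreal_mult'[symmetric] ennreal_leI)
      then show ?thesis by (rule order_trans) simp
    next
      case gt: False
      have "s powr (-5/6) \<le> (t/2) powr (-5/6)" using gt t by (intro powr_mono2') auto
      then have "exp (- (t - s) * l\<^sup>2) * s powr (-5/6) \<le> (t/2) powr (-5/6) * exp (- (t - s) * l\<^sup>2)"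
        by (simp add: mult.commute mult_left_mono)
      then have "indicator {0..t} s * ennreal (exp (- (t - s) * l\<^sup>2) * s powr (-5/6))
        \<le> ennreal ((t/2) powr (-5/6)) * (indicator {t/2..t} s * ennreal (exp (- (t - s) * l\<^sup>2)))"
        using True gt by (simp add: ennreal_mult'[symmetric] ennreal_leI)
      then show ?thesis by (rule order_trans) simp
    qed
  qed simp
  have "(\<integral>\<^sup>+s. indicator {0..t} s * ennreal (exp (- (t - s) * l\<^sup>2) * s powr (-5/6)) \<partial>lborel)
     \<le> (\<integral>\<^sup>+s. ennreal (exp (- (t/2) * l\<^sup>2)) * (indicator {0..t/2} s * ennreal (s powr (-5/6)))
        + ennreal ((t/2) powr (-5/6)) * (indicator {t/2..t} s * ennreal (exp (- (t - s) * l\<^sup>2))) \<partial>lborel)"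
    by (rule nn_integral_mono) (rule pw)
  also have "\<dots> = (\<integral>\<^sup>+s. ennreal (exp (- (t/2) * l\<^sup>2)) * (indicator {0..t/2} s * ennreal (s powr (-5/6))) \<partial>lborel)
        + (\<integral>\<^sup>+s. ennreal ((t/2) powr (-5/6)) * (indicator {t/2..t} s * ennreal (exp (- (t - s) * l\<^sup>2))) \<partial>lborel)"
    by (rule nn_integral_add) measurable
  also have "(\<integral>\<^sup>+s. ennreal (exp (- (t/2) * l\<^sup>2)) * (indicator {0..t/2} s * ennreal (s powr (-5/6))) \<partial>lborel)
     = ennreal (exp (- (t/2) * l\<^sup>2)) * (\<integral>\<^sup>+s. indicator {0..t/2} s * ennreal (s powr (-5/6)) \<partial>lborel)"
    by (rule nn_integral_cmult) measurable
  also have "(\<integral>\<^sup>+s. ennreal ((t/2) powr (-5/6)) * (indicator {t/2..t} s * ennreal (exp (- (t - s) * l\<^sup>2))) \<partial>lborel)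
     = ennreal ((t/2) powr (-5/6)) * (\<integral>\<^sup>+s. indicator {t/2..t} s * ennreal (exp (- (t - s) * l\<^sup>2)) \<partial>lborel)"
    by (rule nn_integral_cmult) measurable
  also have "ennreal (exp (- (t/2) * l\<^sup>2)) * (\<integral>\<^sup>+s. indicator {0..t/2} s * ennreal (s powr (-5/6)) \<partial>lborel)
        + ennreal ((t/2) powr (-5/6)) * (\<integral>\<^sup>+s. indicator {t/2..t} s * ennreal (exp (- (t - s) * l\<^sup>2)) \<partial>lborel) = ennreal (exp (- (t/2) * l\<^sup>2) * (6 * (t/2) powr (1/6)) + (t/2) powr (-5/6) * ((1 - exp (- (t/2) * l\<^sup>2)) / l\<^sup>2))"
  proof -
    have n2: "0 \<le> (1 - exp (- (t/2) * l\<^sup>2)) / l\<^sup>2" using t l by simp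
    have e1: "ennreal (exp (- (t/2) * l\<^sup>2)) * ennreal (6 * (t/2) powr (1/6)) = ennreal (exp (- (t/2) * l\<^sup>2) * (6 * (t/2) powr (1/6)))"
      by (rule ennreal_mult'[symmetric]) simp
    have e2: "ennreal ((t/2) powr (-5/6)) * ennreal ((1 - exp (- (t/2) * l\<^sup>2)) / l\<^sup>2) = ennreal ((t/2) powr (-5/6) * ((1 - exp (- (t/2) * l\<^sup>2)) / l\<^sup>2))"
      by (rule ennreal_mult'[symmetric]) simp
    have e3: "ennreal (exp (- (t/2) * l\<^sup>2) * (6 * (t/2) powr (1/6))) + ennreal ((t/2) powr (-5/6) * ((1 - exp (- (t/2) * l\<^sup>2)) / l\<^sup>2))
       = ennreal (exp (- (t/2) * l\<^sup>2) * (6 * (t/2) powr (1/6)) + (t/2) powr (-5/6) * ((1 - exp (- (t/2) * l\<^sup>2)) / l\<^sup>2))"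
      by (rule ennreal_plus[symmetric]) (simp, rule mult_nonneg_nonneg[OF _ n2], simp)
    show ?thesis unfolding i1 i2 e1 e2 e3 ..
  qed
  finally show ?thesis .
qed



lemma ome: assumes "0 \<le> \<theta>" "\<theta> \<le> 1" "0 \<le> (x::real)" shows "1 - exp (- x) \<le> x powr \<theta>"
proof (cases "x \<le> 1")
  case True
  have "1 - exp (- x) \<le> x" using exp_ge_add_one_self[of "-x"] by linarith
  also have "x \<le> x powr \<theta>"
  proof (cases "x = 0")
    case False
    then have "x powr 1 \<le> x powr \<theta>" using assms True by (intro powr_mono') auto
    then show ?thesis using False assms by simp
  qed simp
  finally show ?thesis .
next
  case False
  have "1 - exp (- x) \<le> 1" by simp
  also have "1 \<le> x powr \<theta>" using False assms by (intro ge_one_powr_ge_zero) auto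
  finally show ?thesis .
qed

lemma xe: assumes "0 \<le> \<theta>" "\<theta> \<le> 1" "0 \<le> (x::real)" shows "x powr \<theta> * exp (- x) \<le> 1"
proof (cases "x \<le> 1")
  case True
  have "x powr \<theta> \<le> 1" using True assms by (intro powr_le1) auto
  moreover have "exp (- x) \<le> 1" using assms by simp
  ultimately show ?thesis by (metis mult_le_one exp_ge_zero powr_ge_zero)
next
  case False
  have "x powr \<theta> \<le> x powr 1" using False assms by (intro powr_mono) auto
  also have "\<dots> \<le> exp x"
  proof -
    have "x powr 1 = x" using False by simp
    then show ?thesis using exp_ge_add_one_self[of x] by linarith
  qed
  finally have "x powr \<theta> \<le> exp x" .
  then show ?thesis by (simp add: exp_minus divide_simps)
qed

lemma sq_powr: "0 < (l::real) \<Longrightarrow> (l\<^sup>2) powr a = l powr (2 * a)"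
proof -
  assume l: "0 < l"
  have e: "l\<^sup>2 = l powr 2" using l by (simp add: powr_realpow)
  show ?thesis unfolding e by (simp add: powr_powr)
qed

definition RT :: "real \<Rightarrow> real \<Rightarrow> real" where
  "RT t l = exp (- (t/2) * l\<^sup>2) * (6 * (t/2) powr (1/6)) + (t/2) powr (-5/6) * ((1 - exp (- (t/2) * l\<^sup>2)) / l\<^sup>2)"

lemma RT_X: assumes t: "0 < t" and l: "0 < l" shows "l powr (1/3) * RT t l \<le> 7"
proof -
  define h where "h = t/2"
  have h: "0 < h" unfolding h_def using t by simp
  define x where "x = h * l\<^sup>2"
  have x: "0 \<le> x" unfolding x_def using h by simp
  have x16: "x powr (1/6) = h powr (1/6) * l powr (1/3)"
  proof -
    have "x powr (1/6) = h powr (1/6) * (l\<^sup>2) powr (1/6)" unfolding x_def using h by (simp add: powr_mult)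
    also have "(l\<^sup>2) powr (1/6) = l powr (1/3)" using l by (simp add: sq_powr)
    finally show ?thesis .
  qed
  have x56: "x powr (5/6) = h powr (5/6) * l powr (5/3)"
  proof -
    have "x powr (5/6) = h powr (5/6) * (l\<^sup>2) powr (5/6)" unfolding x_def using h by (simp add: powr_mult)
    also have "(l\<^sup>2) powr (5/6) = l powr (5/3)" using l by (simp add: sq_powr)
    finally show ?thesis .
  qed
  have "l powr (1/3) * (exp (- h * l\<^sup>2) * (6 * h powr (1/6))) = 6 * (x powr (1/6) * exp (- x))"
    by (simp only: x16, simp only: x_def mult_ac mult_minus_left)
  also have "\<dots> \<le> 6 * 1" using xe[of "1/6" x] x by (intro mult_left_mono) auto
  finally have p1: "l powr (1/3) * (exp (- h * l\<^sup>2) * (6 * h powr (1/6))) \<le> 6" by simp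
  have b: "1 - exp (- x) \<le> h powr (5/6) * l powr (5/3)" using ome[of "5/6" x] x x56 by simp
  have "l powr (1/3) * (h powr (-5/6) * ((1 - exp (- h * l\<^sup>2)) / l\<^sup>2)) = l powr (1/3) * h powr (-5/6) * (1 - exp (- x)) / l\<^sup>2"
    unfolding x_def by (simp only: mult.assoc times_divide_eq_right mult_minus_left)
  also have "\<dots> \<le> l powr (1/3) * h powr (-5/6) * (h powr (5/6) * l powr (5/3)) / l\<^sup>2"
    using b l by (intro divide_right_mono mult_left_mono) auto
  also have "\<dots> = 1"
  proof -
    have "l powr (1/3) * h powr (-5/6) * (h powr (5/6) * l powr (5/3)) = (h powr (-5/6) * h powr (5/6)) * (l powr (1/3) * l powr (5/3))"
      by (simp only: mult_ac)
    also have "\<dots> = l powr 2" using h l by (simp add: powr_add[symmetric])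
    also have "\<dots> = l\<^sup>2" using l by (simp add: powr_realpow)
    finally show ?thesis using l by simp
  qed
  finally have p2: "l powr (1/3) * (h powr (-5/6) * ((1 - exp (- h * l\<^sup>2)) / l\<^sup>2)) \<le> 1" .
  have "l powr (1/3) * RT t l = l powr (1/3) * (exp (- h * l\<^sup>2) * (6 * h powr (1/6))) + l powr (1/3) * (h powr (-5/6) * ((1 - exp (- h * l\<^sup>2)) / l\<^sup>2))"
    unfolding RT_def h_def by (simp add: distrib_left)
  also have "\<dots> \<le> 7" using p1 p2 by simp
  finally show ?thesis .
qed

lemma RT_Y: assumes t: "0 < t" and l: "0 < l" shows "l * RT t l \<le> 7 * (t/2) powr (-1/3)"
proof -
  define h where "h = t/2"
  have h: "0 < h" unfolding h_def using t by simp
  define x where "x = h * l\<^sup>2"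
  have x: "0 \<le> x" unfolding x_def using h by simp
  have a1: "l * exp (- h * l\<^sup>2) \<le> h powr (-1/2)" using rho_exp[OF h, of l] l by simp
  have "l * (exp (- h * l\<^sup>2) * (6 * h powr (1/6))) = 6 * h powr (1/6) * (l * exp (- h * l\<^sup>2))" by (simp add: mult_ac)
  also have "\<dots> \<le> 6 * h powr (1/6) * h powr (-1/2)" using a1 by (intro mult_left_mono) auto
  also have "\<dots> = 6 * h powr (-1/3)" using h by (simp add: mult.assoc powr_add[symmetric])
  finally have p1: "l * (exp (- h * l\<^sup>2) * (6 * h powr (1/6))) \<le> 6 * h powr (-1/3)" .
  have sx: "x powr (1/2) = h powr (1/2) * l"
    unfolding x_def using h l by (simp add: powr_mult powr_half_sqrt)
  have b: "1 - exp (- x) \<le> h powr (1/2) * l" using ome[of "1/2" x] x sx by simp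
  have "l * (h powr (-5/6) * ((1 - exp (- h * l\<^sup>2)) / l\<^sup>2)) = h powr (-5/6) * (1 - exp (- x)) / l"
    unfolding x_def using l by (simp add: power2_eq_square field_simps)
  also have "\<dots> \<le> h powr (-5/6) * (h powr (1/2) * l) / l"
    using b l by (intro divide_right_mono mult_left_mono) auto
  also have "\<dots> = h powr (-1/3)" using l h by (simp add: powr_add[symmetric])
  finally have p2: "l * (h powr (-5/6) * ((1 - exp (- h * l\<^sup>2)) / l\<^sup>2)) \<le> h powr (-1/3)" .
  have "l * RT t l = l * (exp (- h * l\<^sup>2) * (6 * h powr (1/6))) + l * (h powr (-5/6) * ((1 - exp (- h * l\<^sup>2)) / l\<^sup>2))"
    unfolding RT_def h_def by (simp add: distrib_left)
  also have "\<dots> \<le> 7 * h powr (-1/3)" using p1 p2 by simp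
  finally show ?thesis unfolding h_def .
qed



lemma norm_int_le:
  fixes f :: "'a \<Rightarrow> 'b::{banach, second_countable_topology}"
  shows "ennreal (norm (integral\<^sup>L M f)) \<le> (\<integral>\<^sup>+x. ennreal (norm (f x)) \<partial>M)"
proof (cases "integrable M f")
  case True then show ?thesis by (rule integral_norm_bound_ennreal)
next
  case False then show ?thesis by (simp add: not_integrable_integral_eq)
qed

lemma AE_reflect:
  fixes \<xi> :: "'a::euclidean_space"
  assumes "AE x in lborel. P x"
  shows "AE \<eta> in lborel. P (\<xi> - \<eta>)"
proof -
  from assms obtain N where N: "{x \<in> space lborel. \<not> P x} \<subseteq> N" "emeasure lborel N = 0" "N \<in> sets lborel"
    by (auto elim: AE_E)
  define h where "h = (\<lambda>x::'a. \<xi> + (-1) *\<^sub>R x)"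
  have hm: "h \<in> borel_measurable borel" unfolding h_def by simp
  have "lborel = density (distr lborel borel h) (\<lambda>_. \<bar>-1::real\<bar>^DIM('a))"
    unfolding h_def by (rule lborel_affine) simp
  then have "lborel = distr lborel borel h" by (simp add: density_1)
  then have "emeasure lborel N = emeasure (distr lborel borel h) N" by simp
  also have "\<dots> = emeasure lborel (h -` N \<inter> space lborel)"
    using N(3) hm by (intro emeasure_distr) (auto simp: measurable_lborel1)
  finally have z: "emeasure lborel (h -` N) = 0" using N(2) by simp
  have hs: "h -` N \<in> sets lborel" using N(3) hm by (auto simp: measurable_lborel1 measurable_sets_borel)
  show ?thesis
  proof (rule AE_I[OF _ z hs])
    show "{x \<in> space lborel. \<not> P (\<xi> - x)} \<subseteq> h -` N" using N(1) unfolding h_def by auto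
  qed
qed

lemma esss_fin:
  fixes f :: "'a::euclidean_space \<Rightarrow> ereal"
  assumes fin: "esssup lborel f < \<infinity>" and nn: "\<And>x. 0 \<le> f x"
  shows "\<exists>Y\<ge>0. esssup lborel f = ereal Y \<and> (AE x in lborel. f x \<le> ereal Y)"
proof -
  have fm: "f \<in> borel_measurable lborel"
  proof (rule ccontr)
    assume "f \<notin> borel_measurable lborel"
    then have "esssup lborel f = top" by (rule esssup_non_measurable)
    with fin show False by (simp add: top_ereal_def)
  qed
  have "esssup lborel (\<lambda>x::'a. 0::ereal) \<le> esssup lborel f"
    by (rule esssup_mono) (auto intro: nn)
  moreover have "esssup lborel (\<lambda>x::'a. 0::ereal) = 0"
    by (rule esssup_const) simp
  ultimately have "0 \<le> esssup lborel f" by simp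
  then obtain Y where Y: "esssup lborel f = ereal Y" "0 \<le> Y" using fin
    by (cases "esssup lborel f") auto
  moreover have "AE x in lborel. f x \<le> esssup lborel f" by (rule esssup_AE)
  ultimately show ?thesis by auto
qed



lemma F_bound:
  fixes \<xi> \<eta> :: "real^'n::finite" and U :: "real \<Rightarrow> real^'n \<Rightarrow> complex"
  assumes s: "0 < s" and \<tau>: "0 < \<tau>" and \<eta>0: "\<eta> \<noteq> 0" and \<eta>\<xi>: "\<xi> - \<eta> \<noteq> 0"
    and Ub: "s powr (1/3) * norm (\<xi> - \<eta>) powr a * cmod (U s (\<xi> - \<eta>)) \<le> Y"
    and gb: "norm \<eta> powr real CARD('n) * cmod (g \<eta>) \<le> P" and Y0: "0 \<le> Y" and P0: "0 \<le> P"
  shows "norm (complex_of_real (exp (- (t - s) * (norm \<xi>)\<^sup>2) * (\<xi> \<bullet> \<eta>) * exp (- s * (norm \<eta>)\<^sup>2 / \<tau>)) * U s (\<xi> - \<eta>) * g \<eta>)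
    \<le> (exp (- (t - s) * (norm \<xi>)\<^sup>2) * norm \<xi> * Y * P * s powr (-1/3)) *
       (norm \<eta> powr (1 - real CARD('n)) * norm (\<xi> - \<eta>) powr (-a) * exp (- (s/\<tau>) * (norm \<eta>)\<^sup>2))"
proof -
  define d where "d = real CARD('n)"
  define e1 where "e1 = exp (- (t - s) * (norm \<xi>)\<^sup>2)"
  define e2 where "e2 = exp (- (s/\<tau>) * (norm \<eta>)\<^sup>2)"
  have e2': "exp (- s * (norm \<eta>)\<^sup>2 / \<tau>) = e2" unfolding e2_def by simp
  have n1: "0 < norm \<eta>" "0 < norm (\<xi> - \<eta>)" using \<eta>0 \<eta>\<xi> by auto
  have u: "cmod (U s (\<xi> - \<eta>)) \<le> Y * s powr (-1/3) * norm (\<xi> - \<eta>) powr (-a)"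
  proof -
    have p: "0 < s powr (1/3) * norm (\<xi> - \<eta>) powr a" using s n1 by simp
    have "cmod (U s (\<xi> - \<eta>)) \<le> Y / (s powr (1/3) * norm (\<xi> - \<eta>) powr a)"
      using Ub p by (simp add: field_simps mult.commute)
    also have "\<dots> = Y * s powr (-1/3) * norm (\<xi> - \<eta>) powr (-a)"
      using s n1 by (simp add: powr_minus_divide divide_simps)
    finally show ?thesis .
  qed
  have gg: "cmod (g \<eta>) \<le> P * norm \<eta> powr (- d)"
  proof -
    have p: "0 < norm \<eta> powr d" using n1 by simp
    have "cmod (g \<eta>) \<le> P / norm \<eta> powr d" using gb p unfolding d_def by (simp add: field_simps mult.commute)
    also have "\<dots> = P * norm \<eta> powr (- d)" by (simp add: powr_minus_divide divide_simps)
    finally show ?thesis .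
  qed
  have cs: "\<bar>\<xi> \<bullet> \<eta>\<bar> \<le> norm \<xi> * norm \<eta>" by (rule Cauchy_Schwarz_ineq2)
  have "norm (complex_of_real (e1 * (\<xi> \<bullet> \<eta>) * e2) * U s (\<xi> - \<eta>) * g \<eta>)
        = e1 * \<bar>\<xi> \<bullet> \<eta>\<bar> * e2 * cmod (U s (\<xi> - \<eta>)) * cmod (g \<eta>)"
    unfolding e1_def e2_def by (simp add: norm_mult abs_mult)
  also have "\<dots> \<le> e1 * (norm \<xi> * norm \<eta>) * e2 * (Y * s powr (-1/3) * norm (\<xi> - \<eta>) powr (-a)) * (P * norm \<eta> powr (- d))"
    by (intro mult_mono mult_left_mono mult_right_mono cs u gg) (auto simp: e1_def e2_def intro!: mult_nonneg_nonneg Y0 P0)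
  also have "\<dots> = (e1 * norm \<xi> * Y * P * s powr (-1/3)) * ((norm \<eta> * norm \<eta> powr (- d)) * norm (\<xi> - \<eta>) powr (-a) * e2)"
    by (simp only: mult_ac)
  also have "norm \<eta> * norm \<eta> powr (- d) = norm \<eta> powr (1 - d)"
  proof -
    have "norm \<eta> powr (1 - d) = norm \<eta> powr 1 * norm \<eta> powr (-d)" using powr_add[of "norm \<eta>" 1 "-d"] by simp
    then show ?thesis using n1 by simp
  qed
  finally show ?thesis unfolding e2' e1_def e2_def d_def .
qed



lemma RT_nonneg: assumes "0 < t" shows "0 \<le> RT t l"
proof -
  have "0 \<le> t/2 * l\<^sup>2" using assms by simp
  then have "exp (- (t/2) * l\<^sup>2) \<le> 1" by simp
  then show ?thesis unfolding RT_def using assms by (intro add_nonneg_nonneg mult_nonneg_nonneg divide_nonneg_nonneg) auto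
qed

lemma Lop_pt:
  fixes U :: "real \<Rightarrow> real^'n::finite \<Rightarrow> complex" and g :: "real^'n \<Rightarrow> complex" and \<xi> :: "real^'n"
  assumes \<tau>: "0 < \<tau>" and a0: "0 \<le> a" and ad: "a < real CARD('n)"
    and Ub: "AE s in lborel. AE \<zeta> in lborel. 0 < s \<longrightarrow> s powr (1/3) * norm \<zeta> powr a * cmod (U s \<zeta>) \<le> Y"
    and gb: "AE \<eta> in lborel. norm \<eta> powr real CARD('n) * cmod (g \<eta>) \<le> P"
    and Y0: "0 \<le> Y" and P0: "0 \<le> P" and t: "0 < t" and \<xi>: "\<xi> \<noteq> 0"
  shows "cmod (Lop \<tau> g U t \<xi>) \<le> (2*pi) powr (- real CARD('n)) * (norm \<xi> * Y * P * KJ a (real CARD('n)) * norm \<xi> powr (-a) * sqrt \<tau>) * RT t (norm \<xi>)"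
proof -
  define d where "d = real CARD('n)"
  define l where "l = norm \<xi>"
  have l: "0 < l" unfolding l_def using \<xi> by simp
  define c0 where "c0 = (2*pi) powr (- d)"
  define KK where "KK = l * Y * P * KJ a d * l powr (-a) * sqrt \<tau>"
  have KJ0: "0 \<le> KJ a d" unfolding KJ_def KG_def d_def using ad
    by (intro mult_nonneg_nonneg add_nonneg_nonneg less_imp_le[OF Kin_pos] less_imp_le[OF Kout_pos]) auto
  have KK0: "0 \<le> KK" unfolding KK_def using l Y0 P0 KJ0 \<tau> by (intro mult_nonneg_nonneg) auto
  define F where "F = (\<lambda>s \<eta>. complex_of_real (exp (- (t - s) * (norm \<xi>)\<^sup>2) * (\<xi> \<bullet> \<eta>) * exp (- s * (norm \<eta>)\<^sup>2 / \<tau>)) * U s (\<xi> - \<eta>) * g \<eta>)"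
  have L: "Lop \<tau> g U t \<xi> = complex_of_real c0 * (LINT s|lborel. indicator {0..t} s *\<^sub>R (LINT \<eta>|lborel. F s \<eta>))"
    unfolding Lop_def set_lebesgue_integral_def F_def c0_def d_def by simp
  have nz: "AE s in lborel. s \<noteq> (0::real)"
    by (rule AE_I'[OF countable_imp_null_set_lborel[of "{0}"]]) auto
  have ae0: "AE \<eta> in lborel. \<eta> \<noteq> (0::real^'n)"
    by (rule AE_I'[OF countable_imp_null_set_lborel[of "{0}"]]) auto
  have ae1: "AE \<eta> in lborel. \<eta> \<noteq> \<xi>"
    by (rule AE_I'[OF countable_imp_null_set_lborel[of "{\<xi>}"]]) auto
  have A: "AE s in lborel. indicator {0..t} s * ennreal (norm (LINT \<eta>|lborel. F s \<eta>))
            \<le> ennreal KK * (indicator {0..t} s * ennreal (exp (- (t - s) * l\<^sup>2) * s powr (-5/6)))"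
    using Ub nz
  proof eventually_elim
    case (elim s)
    show ?case
    proof (cases "s \<in> {0..t}")
      case False then show ?thesis by simp
    next
      case True
      then have s: "0 < s" using elim(2) by auto
      have hs': "AE \<eta> in lborel. s powr (1/3) * norm (\<xi> - \<eta>) powr a * cmod (U s (\<xi> - \<eta>)) \<le> Y"
        using AE_reflect[OF elim(1), of \<xi>] s by simp
      define Ms where "Ms = exp (- (t - s) * l\<^sup>2) * l * Y * P * s powr (-1/3)"
      have Ms0: "0 \<le> Ms" unfolding Ms_def using l Y0 P0 by simp
      define Jf where "Jf = (\<lambda>\<eta>::real^'n. norm \<eta> powr (1 - d) * norm (\<xi> - \<eta>) powr (-a) * exp (- (s/\<tau>) * (norm \<eta>)\<^sup>2))"
      have Jm: "Jf \<in> borel_measurable lborel" unfolding Jf_def by measurable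
      have aeF: "AE \<eta> in lborel. norm (F s \<eta>) \<le> Ms * Jf \<eta>"
        using hs' gb ae0 ae1
      proof eventually_elim
        case (elim \<eta>)
        have "\<xi> - \<eta> \<noteq> 0" using elim(4) by simp
        from F_bound[where \<xi>=\<xi> and \<eta>=\<eta> and U=U and g=g and s=s and \<tau>=\<tau> and a=a and Y=Y and P=P and t=t, OF s \<tau> elim(3) this elim(1) elim(2) Y0 P0]
        show ?case unfolding F_def Ms_def Jf_def l_def d_def by simp
      qed
      have "ennreal (norm (LINT \<eta>|lborel. F s \<eta>)) \<le> (\<integral>\<^sup>+\<eta>. ennreal (norm (F s \<eta>)) \<partial>lborel)"
        by (rule norm_int_le)
      also have "\<dots> \<le> (\<integral>\<^sup>+\<eta>. ennreal Ms * ennreal (Jf \<eta>) \<partial>lborel)"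
        by (rule nn_integral_mono_AE) (use aeF Ms0 in \<open>auto simp: ennreal_mult'[symmetric] intro: ennreal_leI elim: eventually_mono\<close>)
      also have "\<dots> = ennreal Ms * (\<integral>\<^sup>+\<eta>. ennreal (Jf \<eta>) \<partial>lborel)"
        by (rule nn_integral_cmult) (use Jm in simp)
      also have "\<dots> \<le> ennreal Ms * ennreal (KJ a d * l powr (-a) * (s/\<tau>) powr (-1/2))"
      proof (rule mult_left_mono)
        have "(\<integral>\<^sup>+\<eta>. ennreal (norm \<eta> powr (1 - real DIM(real^'n)) * norm (\<xi> - \<eta>) powr (-a) * exp (- (s/\<tau>) * (norm \<eta>)\<^sup>2)) \<partial>lborel)
           \<le> ennreal (KJ a (real DIM(real^'n)) * norm \<xi> powr (-a) * (s/\<tau>) powr (-1/2))"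
          by (rule J_int) (use a0 ad s \<tau> \<xi> in auto)
        then show "(\<integral>\<^sup>+\<eta>. ennreal (Jf \<eta>) \<partial>lborel) \<le> ennreal (KJ a d * l powr (-a) * (s/\<tau>) powr (-1/2))"
          unfolding Jf_def d_def l_def by simp
      qed simp
      also have "\<dots> = ennreal (KK * (exp (- (t - s) * l\<^sup>2) * s powr (-5/6)))"
      proof -
        have sp: "(s/\<tau>) powr (-1/2) = s powr (-1/2) * sqrt \<tau>"
          using s \<tau> by (simp add: powr_divide powr_minus_divide powr_half_sqrt)
        have ss: "s powr (-1/3) * s powr (-1/2) = s powr (-5/6)"
          using s by (simp add: powr_add[symmetric])
        have "Ms * (KJ a d * l powr (-a) * (s/\<tau>) powr (-1/2)) = KK * (exp (- (t - s) * l\<^sup>2) * (s powr (-1/3) * s powr (-1/2)))"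
          unfolding Ms_def KK_def sp by (simp only: mult_ac)
        then have "Ms * (KJ a d * l powr (-a) * (s/\<tau>) powr (-1/2)) = KK * (exp (- (t - s) * l\<^sup>2) * s powr (-5/6))"
          unfolding ss .
        then show ?thesis using Ms0 by (simp add: ennreal_mult'[symmetric] del: ennreal_mult')
      qed
      finally show ?thesis using True KK0 by (simp add: ennreal_mult'[symmetric] del: ennreal_mult')
    qed
  qed
  have "ennreal (norm (LINT s|lborel. indicator {0..t} s *\<^sub>R (LINT \<eta>|lborel. F s \<eta>)))
      \<le> (\<integral>\<^sup>+s. ennreal (norm (indicator {0..t} s *\<^sub>R (LINT \<eta>|lborel. F s \<eta>))) \<partial>lborel)"
    by (rule norm_int_le)
  also have "\<dots> = (\<integral>\<^sup>+s. indicator {0..t} s * ennreal (norm (LINT \<eta>|lborel. F s \<eta>)) \<partial>lborel)"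
    by (rule nn_integral_cong) (simp add: indicator_def)
  also have "\<dots> \<le> (\<integral>\<^sup>+s. ennreal KK * (indicator {0..t} s * ennreal (exp (- (t - s) * l\<^sup>2) * s powr (-5/6))) \<partial>lborel)"
    by (rule nn_integral_mono_AE[OF A])
  also have "\<dots> = ennreal KK * (\<integral>\<^sup>+s. indicator {0..t} s * ennreal (exp (- (t - s) * l\<^sup>2) * s powr (-5/6)) \<partial>lborel)"
    by (rule nn_integral_cmult) measurable
  also have "\<dots> \<le> ennreal KK * ennreal (RT t l)"
    unfolding RT_def by (intro mult_left_mono T_int t l) simp
  also have "\<dots> = ennreal (KK * RT t l)" using KK0 by (simp add: ennreal_mult'[symmetric] del: ennreal_mult')
  finally have B: "norm (LINT s|lborel. indicator {0..t} s *\<^sub>R (LINT \<eta>|lborel. F s \<eta>)) \<le> KK * RT t l"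
    using KK0 RT_nonneg[OF t, of l] by (subst (asm) ennreal_le_iff) (auto intro: mult_nonneg_nonneg)
  have c00: "0 \<le> c0" unfolding c0_def by simp
  have "cmod (Lop \<tau> g U t \<xi>) = c0 * norm (LINT s|lborel. indicator {0..t} s *\<^sub>R (LINT \<eta>|lborel. F s \<eta>))"
    unfolding L using c00 by (simp add: norm_mult)
  also have "\<dots> \<le> c0 * (KK * RT t l)" using B c00 by (rule mult_left_mono)
  finally show ?thesis unfolding c0_def KK_def l_def d_def by (simp add: mult_ac)
qed



lemma Lop_cong0:
  fixes U V :: "real \<Rightarrow> real^'n::finite \<Rightarrow> complex"
  assumes "\<And>s. 0 < s \<Longrightarrow> V s = U s"
  shows "Lop \<tau> g U t \<xi> = Lop \<tau> g V t \<xi>"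
  proof -
    define F where "F = (\<lambda>W x. indicator {0..t} x *\<^sub>R (CLBINT eta. complex_of_real (exp (- (t - x) * (norm \<xi>)\<^sup>2) * (\<xi> \<bullet> eta) * exp (- x * (norm eta)\<^sup>2 / \<tau>)) * W x (\<xi> - eta) * g eta))"
    have c: "countable {0::real}" by simp
    have n: "\<And>x. x \<in> {0} \<Longrightarrow> emeasure lborel {x::real} = 0" by simp
    have s: "\<And>x. x \<in> {0} \<Longrightarrow> {x::real} \<in> sets lborel" by simp
    have e: "F U x = F V x" if "x \<in> space lborel" "x \<notin> {0}" for x
    proof (cases "x \<in> {0..t}")
      case True then have "0 < x" using that by auto
      then have "V x = U x" by (rule assms)
      then show ?thesis unfolding F_def by (simp only:)
    next
      case False then show ?thesis unfolding F_def by simp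
    qed
    have "integral\<^sup>L lborel (F U) = integral\<^sup>L lborel (F V)"
      by (rule integral_discrete_difference[OF c n s e])
    then show ?thesis unfolding Lop_def set_lebesgue_integral_def F_def by simp
  qed

lemma meas_Lop:
  fixes U :: "real \<Rightarrow> real^'n::finite \<Rightarrow> complex"
  assumes U: "meas_td U" and g[measurable]: "g \<in> borel_measurable borel"
  shows "meas_td (Lop \<tau> g U)"
proof -
  define V where "V = (\<lambda>s \<zeta>. if 0 < s then U s \<zeta> else 0)"
  have V0: "(\<lambda>p. V (fst p) (snd p)) \<in> borel_measurable borel"
    using U unfolding meas_td_def V_def by (simp add: measurable_lborel1)
  have V[measurable]: "(\<lambda>p. V (fst p) (snd p)) \<in> borel_measurable (borel \<Otimes>\<^sub>M borel)"
    using V0 by (simp add: borel_prod)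
  have eq: "Lop \<tau> g U t \<xi> = Lop \<tau> g V t \<xi>" for t \<xi>
    by (rule Lop_cong0) (simp add: V_def fun_eq_iff)
  have [measurable]: "(\<lambda>p. Lop \<tau> g V (fst p) (snd p)) \<in> borel_measurable (borel \<Otimes>\<^sub>M borel)"
    by (rule meas_LopV[OF V g])
  have "(\<lambda>p::real\<times>(real^'n). if 0 < fst p then Lop \<tau> g V (fst p) (snd p) else 0) \<in> borel_measurable (borel \<Otimes>\<^sub>M borel)"
    by measurable
  then show ?thesis unfolding meas_td_def eq by (simp add: measurable_lborel1 borel_prod)
qed

lemma wmeas:
  fixes V :: "real \<Rightarrow> real^'n::finite \<Rightarrow> complex"
  assumes "meas_td V"
  shows "(\<lambda>p::real\<times>(real^'n). if 0 < fst p then ereal (fst p powr b * norm (snd p) powr a * cmod (V (fst p) (snd p))) else 0) \<in> borel_measurable lborel"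
proof -
  define W where "W = (\<lambda>p::real\<times>(real^'n). if 0 < fst p then V (fst p) (snd p) else 0)"
  have "W \<in> borel_measurable borel" using assms unfolding meas_td_def W_def by (simp add: measurable_lborel1)
  then have W[measurable]: "W \<in> borel_measurable (borel \<Otimes>\<^sub>M borel)" by (simp add: borel_prod)
  have "(\<lambda>p::real\<times>(real^'n). if 0 < fst p then ereal (fst p powr b * norm (snd p) powr a * cmod (W p)) else 0) \<in> borel_measurable (borel \<Otimes>\<^sub>M borel)"
    by measurable
  then have "(\<lambda>p::real\<times>(real^'n). if 0 < fst p then ereal (fst p powr b * norm (snd p) powr a * cmod (W p)) else 0) \<in> borel_measurable lborel"
    by (simp add: borel_prod measurable_lborel1)
  moreover have "(\<lambda>p::real\<times>(real^'n). if 0 < fst p then ereal (fst p powr b * norm (snd p) powr a * cmod (W p)) else 0)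
      = (\<lambda>p. if 0 < fst p then ereal (fst p powr b * norm (snd p) powr a * cmod (V (fst p) (snd p))) else 0)"
    unfolding W_def by (rule ext) simp
  ultimately show ?thesis by simp
qed



lemma KJ_pos: "0 \<le> a \<Longrightarrow> a < d \<Longrightarrow> 0 < KJ a d"
  unfolding KJ_def KG_def by (intro mult_pos_pos add_pos_pos Kin_pos Kout_pos) auto

lemma ln_ge1: assumes "0 < (\<tau>::real)" "\<tau> \<le> 1" shows "1 \<le> \<bar>ln (\<tau> / exp 1)\<bar>"
proof -
  have "ln (\<tau> / exp 1) = ln \<tau> - 1" using ln_divide_pos[of \<tau> "exp 1"] assms by simp
  moreover have "ln \<tau> \<le> 0" using assms by simp
  ultimately show ?thesis by simp
qed

theorem mainTheorem9:
  assumes "CARD('n::finite) \<ge> 2"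
  shows "\<exists>C>0. \<forall>(\<tau>::real) (g::real^'n \<Rightarrow> complex).
     0 < \<tau> \<and> \<tau> \<le> 1 \<and> g \<in> borel_measurable lborel \<and> PMgrad g < \<infinity> \<longrightarrow>
     (\<forall>U::real \<Rightarrow> real^'n \<Rightarrow> complex.
        inY (real CARD('n) - 4/3) U \<longrightarrow>
          inY (real CARD('n) - 4/3) (Lop \<tau> g U) \<and>
          Ynorm (real CARD('n) - 4/3) (Lop \<tau> g U)
            \<le> ereal (C * sqrt \<tau> * \<bar>ln (\<tau> / exp 1)\<bar>) * PMgrad g * Ynorm (real CARD('n) - 4/3) U \<and>
          inX (Lop \<tau> g U) \<and>
          Xnorm (Lop \<tau> g U)
            \<le> ereal (C * sqrt \<tau> * \<bar>ln (\<tau> / exp 1)\<bar>) * PMgrad g * Ynorm (real CARD('n) - 4/3) U)"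
proof -
  define d where "d = real CARD('n)"
  define a where "a = d - 4/3"
  have d2: "2 \<le> d" using assms unfolding d_def by simp
  have a0: "0 \<le> a" "a < d" unfolding a_def using d2 by auto
  define c0 where "c0 = (2*pi) powr (- d)"
  have c00: "0 < c0" unfolding c0_def by simp
  define C where "C = c0 * KJ a d * 7 * 2 powr (1/3)"
  have C0: "0 < C" unfolding C_def using c00 KJ_pos[OF a0] by simp
  show ?thesis
  proof (intro exI[of _ C] conjI allI impI C0)
    fix \<tau> :: real and g :: "real^'n \<Rightarrow> complex" and U :: "real \<Rightarrow> real^'n \<Rightarrow> complex"
    assume H: "0 < \<tau> \<and> \<tau> \<le> 1 \<and> g \<in> borel_measurable lborel \<and> PMgrad g < \<infinity>"
    assume HU: "inY (real CARD('n) - 4/3) U"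
    have \<tau>: "0 < \<tau>" "\<tau> \<le> 1" and gm: "g \<in> borel_measurable borel" and gfin: "PMgrad g < \<infinity>"
      using H by (auto simp: measurable_lborel1)
    obtain P where P0: "0 \<le> P" and PE: "PMgrad g = ereal P"
      and gAE: "AE \<eta> in lborel. ereal (norm \<eta> powr real CARD('n) * cmod (g \<eta>)) \<le> ereal P"
    proof -
      have g0: "\<And>\<eta>::real^'n. 0 \<le> ereal (norm \<eta> powr real CARD('n) * cmod (g \<eta>))" by simp
      have gf: "esssup lborel (\<lambda>\<eta>::real^'n. ereal (norm \<eta> powr real CARD('n) * cmod (g \<eta>))) < \<infinity>"
        using gfin unfolding PMgrad_def .
      show ?thesis using esss_fin[OF gf g0] that unfolding PMgrad_def by blast
    qed
    have gb: "AE \<eta> in lborel. norm \<eta> powr real CARD('n) * cmod (g \<eta>) \<le> P"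
      using gAE by (rule eventually_mono) simp
    have b: "1 + (real CARD('n) - 4/3 - real CARD('n)) / 2 = (1/3::real)" by simp
    define fU where "fU = (\<lambda>p::real\<times>(real^'n). if 0 < fst p then ereal (fst p powr (1/3) * norm (snd p) powr a * cmod (U (fst p) (snd p))) else 0)"
    have UY: "Ynorm (real CARD('n) - 4/3) U = esssup lborel fU"
      unfolding Ynorm_def wnorm_def fU_def b a_def d_def ..
    have Um: "meas_td U" and Ufin: "esssup lborel fU < \<infinity>" using HU unfolding inY_def UY by auto
    obtain Y where Y0: "0 \<le> Y" and YE: "esssup lborel fU = ereal Y"
      and UAE: "AE p in lborel. fU p \<le> ereal Y"
    proof -
      have fU0: "\<And>p. 0 \<le> fU p" unfolding fU_def by simp
      show ?thesis using esss_fin[OF Ufin fU0] that by blast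
    qed
    have "AE p in lborel \<Otimes>\<^sub>M lborel. fU p \<le> ereal Y" by (subst lborel_prod) (rule UAE)
    then have "AE s in lborel. AE \<zeta> in lborel. fU (s, \<zeta>) \<le> ereal Y" by (rule lborel_pair.AE_pair)
    then have Ub: "AE s in lborel. AE \<zeta> in lborel. 0 < s \<longrightarrow> s powr (1/3) * norm \<zeta> powr a * cmod (U s \<zeta>) \<le> Y"
      by (rule eventually_mono) (auto elim: eventually_mono simp: fU_def)
    define Q where "Q = c0 * Y * P * KJ a d * sqrt \<tau>"
    have Q0: "0 \<le> Q" unfolding Q_def using c00 Y0 P0 KJ_pos[OF a0] \<tau> by simp
    have pt: "cmod (Lop \<tau> g U t \<xi>) \<le> c0 * (norm \<xi> * Y * P * KJ a d * norm \<xi> powr (-a) * sqrt \<tau>) * RT t (norm \<xi>)"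
      if t: "0 < t" and \<xi>: "\<xi> \<noteq> 0" for t \<xi>
      using Lop_pt[OF \<tau>(1) a0(1) _ Ub gb Y0 P0 t \<xi>] a0(2) unfolding c0_def d_def by simp
    have ptY: "t powr (1/3) * norm \<xi> powr a * cmod (Lop \<tau> g U t \<xi>) \<le> Q * 7 * 2 powr (1/3)" if t: "0 < t" for t \<xi>
    proof (cases "\<xi> = 0")
      case True then show ?thesis using Q0 a0 by simp
    next
      case False
      define l where "l = norm \<xi>"
      have l: "0 < l" unfolding l_def using False by simp
      have "t powr (1/3) * norm \<xi> powr a * cmod (Lop \<tau> g U t \<xi>)
          \<le> t powr (1/3) * l powr a * (c0 * (l * Y * P * KJ a d * l powr (-a) * sqrt \<tau>) * RT t l)"
        using pt[OF t False] unfolding l_def by (intro mult_left_mono) auto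
      also have "\<dots> = Q * t powr (1/3) * (l * RT t l) * (l powr a * l powr (-a))"
        unfolding Q_def by (simp only: mult_ac)
      also have "l powr a * l powr (-a) = 1" using l by (simp add: powr_add[symmetric])
      also have "Q * t powr (1/3) * (l * RT t l) * 1 \<le> Q * t powr (1/3) * (7 * (t/2) powr (-1/3))"
        using RT_Y[OF t l] Q0 t by (simp add: mult_left_mono)
      also have "t powr (1/3) * (t/2) powr (-1/3) = 2 powr (1/3)"
        using t by (simp add: powr_divide powr_minus_divide)
      then have "Q * t powr (1/3) * (7 * (t/2) powr (-1/3)) = Q * 7 * 2 powr (1/3)"
        by (metis (no_types, opaque_lifting) mult.assoc mult.left_commute)
      finally show ?thesis .
    qed
    have ptX: "norm \<xi> powr (d - 2) * cmod (Lop \<tau> g U t \<xi>) \<le> Q * 7" if t: "0 < t" for t \<xi>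
    proof (cases "\<xi> = 0")
      case True then show ?thesis using Q0 by simp
    next
      case False
      define l where "l = norm \<xi>"
      have l: "0 < l" unfolding l_def using False by simp
      have "norm \<xi> powr (d - 2) * cmod (Lop \<tau> g U t \<xi>)
          \<le> l powr (d - 2) * (c0 * (l * Y * P * KJ a d * l powr (-a) * sqrt \<tau>) * RT t l)"
        using pt[OF t False] unfolding l_def by (intro mult_left_mono) auto
      also have "\<dots> = Q * ((l powr (d - 2) * l * l powr (-a)) * RT t l)"
        unfolding Q_def by (simp only: mult_ac)
      also have "l powr (d - 2) * l * l powr (-a) = l powr (1/3)"
      proof -
        have "l powr (d - 2) * l * l powr (-a) = l powr (d - 2) * l powr 1 * l powr (-a)" using l by simp
        also have "\<dots> = l powr (d - 2 + 1 + (-a))" by (simp only: powr_add[symmetric])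
        also have "d - 2 + 1 + (-a) = 1/3" unfolding a_def by simp
        finally show ?thesis .
      qed
      also have "Q * (l powr (1/3) * RT t l) \<le> Q * 7"
        using RT_X[OF t l] Q0 by (intro mult_left_mono)
      finally show ?thesis .
    qed
    have Lm: "meas_td (Lop \<tau> g U)" by (rule meas_Lop[OF Um gm])
    define KY where "KY = Q * 7 * 2 powr (1/3)"
    have KY0: "0 \<le> KY" unfolding KY_def using Q0 by simp
    have Yb: "Ynorm (real CARD('n) - 4/3) (Lop \<tau> g U) \<le> ereal KY"
      unfolding Ynorm_def wnorm_def b
    proof (rule esssup_I)
      show "(\<lambda>p::real\<times>(real^'n). if 0 < fst p then ereal (fst p powr (1/3) * norm (snd p) powr (real CARD('n) - 4/3) * cmod (Lop \<tau> g U (fst p) (snd p))) else 0) \<in> borel_measurable lborel"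
        by (rule wmeas[OF Lm])
      show "AE p in lborel. (if 0 < fst p then ereal (fst p powr (1/3) * norm (snd p) powr (real CARD('n) - 4/3) * cmod (Lop \<tau> g U (fst p) (snd p))) else 0) \<le> ereal KY"
        using ptY KY0 unfolding KY_def a_def d_def by (intro AE_I2) auto
    qed
    have Xb: "Xnorm (Lop \<tau> g U) \<le> ereal KY"
      unfolding Xnorm_def wnorm_def
    proof (rule esssup_I)
      show "(\<lambda>p::real\<times>(real^'n). if 0 < fst p then ereal (fst p powr 0 * norm (snd p) powr (real CARD('n) - 2) * cmod (Lop \<tau> g U (fst p) (snd p))) else 0) \<in> borel_measurable lborel"
        by (rule wmeas[OF Lm])
      have one: "1 \<le> (2::real) powr (1/3)" by (rule ge_one_powr_ge_zero) auto
      have "Q * 7 \<le> KY" unfolding KY_def using mult_left_mono[OF one, of "Q * 7"] Q0 by simp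
      then show "AE p in lborel. (if 0 < fst p then ereal (fst p powr 0 * norm (snd p) powr (real CARD('n) - 2) * cmod (Lop \<tau> g U (fst p) (snd p))) else 0) \<le> ereal KY"
        using ptX KY0 unfolding d_def by (intro AE_I2) (auto intro: order_trans)
    qed
    have fin: "ereal KY \<le> ereal (C * sqrt \<tau> * \<bar>ln (\<tau> / exp 1)\<bar>) * PMgrad g * Ynorm (real CARD('n) - 4/3) U"
    proof -
      have "KY = C * sqrt \<tau> * P * Y" unfolding KY_def Q_def C_def by (simp only: mult_ac)
      also have "\<dots> \<le> C * sqrt \<tau> * P * Y * \<bar>ln (\<tau> / exp 1)\<bar>"
      proof -
        have nn: "0 \<le> C * sqrt \<tau> * P * Y" using C0 P0 Y0 \<tau> by simp
        show ?thesis using mult_left_mono[OF ln_ge1[OF \<tau>] nn] by simp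
      qed
      finally have "KY \<le> C * sqrt \<tau> * \<bar>ln (\<tau> / exp 1)\<bar> * P * Y" by (simp only: mult_ac)
      then show ?thesis unfolding PE UY YE by simp
    qed
    show "inY (real CARD('n) - 4/3) (Lop \<tau> g U)" unfolding inY_def using Lm Yb by (auto simp: less_le_trans)
    show "Ynorm (real CARD('n) - 4/3) (Lop \<tau> g U) \<le> ereal (C * sqrt \<tau> * \<bar>ln (\<tau> / exp 1)\<bar>) * PMgrad g * Ynorm (real CARD('n) - 4/3) U"
      using Yb fin by (rule order_trans)
    show "inX (Lop \<tau> g U)" unfolding inX_def using Lm Xb by (auto simp: less_le_trans)
    show "Xnorm (Lop \<tau> g U) \<le> ereal (C * sqrt \<tau> * \<bar>ln (\<tau> / exp 1)\<bar>) * PMgrad g * Ynorm (real CARD('n) - 4/3) U"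
      using Xb fin by (rule order_trans)
  qed
qed

end
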